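(* Let $\sigma\colon O_1\to O_2$ be an isomorphism of finite $Act$-labelled posets, let $c_1,c_1'$ be causal markings, $K\subseteq|O_1|$, $a\in Act$, $e\in\mathcal{E}\setminus X_{O_1}$ and $e'\in\mathcal{E}\setminus X_{O_2}$. Then $O_1\rhd c_1\xrightarrow{K\vdash e_a}\delta(O_1,K,e_a)\rhd c_1'$ in the concrete causal case graph if and only if $O_2\rhd c_1\sigma\xrightarrow{\sigma(K)\vdash e'_a}\delta(O_2,\sigma(K),e'_a)\rhd c_1'\,\sigma[e_a\mapsto e'_a]$ in the concrete causal case graph.
   Context: Fix a set $Act$ of action labels and an infinite set $\mathcal{E}$ of event names. A finite $Act$-labelled poset is $O=(X_O,\preccurlyeq_O,l_O)$ with $X_O\subseteq\mathcal{E}$ finite, $\preccurlyeq_O$ a partial order on $X_O$ and $l_O\colon X_O\to Act$; write $|O|=\{(x,l_O(x)):x\in X_O\}$, write $x_a$ for $(x,a)$, and regard $O$ also as a poset on $|O|$. A morphism $\sigma\colon O\to O'$ is a map $X_O\to X_{O'}$ preserving order and labels, acting on labelled events by $\sigma(x_a)=\sigma(x)_a$; an isomorphism is a bijective morphism whose inverse is a morphism. For $K\subseteq|O|$, $\max_O K$ is the set of maximal elements of $K$; $K$ is down-closed w.r.t. $O$ if $y\in K$ and $x\preccurlyeq_O y$ imply $x\in K$. A net is $N=(S,T,F,l)$ with disjoint sets $S$ (places) and $T$ (transitions), $F\subseteq(S\times T)\cup(T\times S)$, $l\colon T\to Act$; ${}^\bullet t=\{s:(s,t)\in F\}$ and $t^\bullet=\{s:(t,s)\in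 F\}$ are assumed nonempty. Fix a net $N$. A causal marking is a finite set $c$ of pairs written $K\vdash s$ with $s\in S$ and $K$ a finite subset of $\mathcal{E}\times Act$; $\mathcal{K}(c)$ is the union of all cause sets $K$ in $c$, $|c|$ is the set of places occurring in $c$, and for a set of places $m$, $K\vdash m=\{K\vdash s:s\in m\}$. For a map $\sigma$ on events, $c\sigma=\{\sigma(K)\vdash s: K\vdash s\in c\}$. A P-marking is a pair $O\rhd c$ of a finite labelled poset $O$ and a causal marking $c$ such that every cause set of $c$ is a down-closed subset of $|O|$. For $K\subseteq|O|$, $e\in\mathcal{E}\setminus X_O$, $a\in Act$, $\delta(O,K,e_a)$ is the labelled poset obtained from $O$ by adding the event $e$ with label $a$ and the pairs $k\preccurlyeq e_a$ for $k\in K$, then taking the reflexive-transitive closure. The concrete causal case graph of $N$ is the smallest transition relation on P-markings closed under the rule: if $t\in T$, $O\rhd c\cup c'$ is a P-marking, $|c|={}^\bullet t$, $a=l(t)$, $e\in\mathcal{E}\setminus X_O$ and $K=\max_O\mathcal{K}(c)$, then $O\rhd c\cup c'\xrightarrow{K\vdash e_a}\delta(O,K,e_a)\rhd(\mathcal{K}(c)\cup\{e_a\}\vdash t^\bullet)\cup c'$. For $\sigma\colon O_1\to O_2$ and $e\notin X_{O_1}$, $e'\notin X_{O_2}$, $\sigma[e_a\mapsto e'_a]$ is the map on $X_{O_1}\cup\{e\}$ that agrees with $\sigma$ on $X_{O_1}$ and sends $e$ to $e'$. *)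

theory Defs
  imports Main "HOL-Library.Infinite_Typeclass"
begin

text \<open>The labelling is a partial map
  'e => 'act option whose domain is X_O, so |P| is exactly the graph of the labelling.\<close>

record ('e, 'act) lposet =
  lab :: "'e \<Rightarrow> 'act option"
  ord :: "('e \<times> 'e) set"

definition ev :: "('e, 'act) lposet \<Rightarrow> 'e set" where
  "ev P = dom (lab P)"

definition lev :: "('e, 'act) lposet \<Rightarrow> ('e \<times> 'act) set" where
  "lev P = {(x, a). lab P x = Some a}"

definition fin_lposet :: "('e, 'act) lposet \<Rightarrow> bool" where
  "fin_lposet P \<longleftrightarrow> finite (ev P) \<and> ord P \<subseteq> ev P \<times> ev P \<and>
     refl_on (ev P) (ord P) \<and> antisym (ord P) \<and> trans (ord P)"

definition lle :: "('e, 'act) lposet \<Rightarrow> ('e \<times> 'act) \<Rightarrow> ('e \<times> 'act) \<Rightarrow> bool" where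
  "lle P k k' \<longleftrightarrow> k \<in> lev P \<and> k' \<in> lev P \<and> (fst k, fst k') \<in> ord P"

definition maxO :: "('e, 'act) lposet \<Rightarrow> ('e \<times> 'act) set \<Rightarrow> ('e \<times> 'act) set" where
  "maxO P K = {k \<in> K. \<forall>k'\<in>K. lle P k k' \<longrightarrow> k' = k}"

definition down_closed :: "('e, 'act) lposet \<Rightarrow> ('e \<times> 'act) set \<Rightarrow> bool" where
  "down_closed P K \<longleftrightarrow> (\<forall>y\<in>K. \<forall>x. lle P x y \<longrightarrow> x \<in> K)"

definition morphism :: "('e \<Rightarrow> 'e) \<Rightarrow> ('e, 'act) lposet \<Rightarrow> ('e, 'act) lposet \<Rightarrow> bool" where
  "morphism \<sigma> P P' \<longleftrightarrow>
     (\<forall>x\<in>ev P. \<sigma> x \<in> ev P' \<and> lab P' (\<sigma> x) = lab P x) \<and>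
     (\<forall>x\<in>ev P. \<forall>y\<in>ev P. (x, y) \<in> ord P \<longrightarrow> (\<sigma> x, \<sigma> y) \<in> ord P')"

definition isomorphism :: "('e \<Rightarrow> 'e) \<Rightarrow> ('e, 'act) lposet \<Rightarrow> ('e, 'act) lposet \<Rightarrow> bool" where
  "isomorphism \<sigma> P P' \<longleftrightarrow> bij_betw \<sigma> (ev P) (ev P') \<and> morphism \<sigma> P P' \<and>
     morphism (the_inv_into (ev P) \<sigma>) P' P"

definition lmap :: "('e \<Rightarrow> 'e) \<Rightarrow> ('e \<times> 'act) set \<Rightarrow> ('e \<times> 'act) set" where
  "lmap \<sigma> K = (\<lambda>(x, a). (\<sigma> x, a)) ` K"

definition delta :: "('e, 'act) lposet \<Rightarrow> ('e \<times> 'act) set \<Rightarrow> 'e \<Rightarrow> 'act \<Rightarrow> ('e, 'act) lposet" where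
  "delta P K e a = \<lparr> lab = (lab P)(e \<mapsto> a),
     ord = Id_on (insert e (ev P)) \<union> (ord P \<union> (fst ` K) \<times> {e})\<^sup>+ \<rparr>"

text \<open>Places and transitions live in distinct types, hence are disjoint;
  the flow relation F is split into its S x T and T x S parts.\<close>

record ('s, 't, 'act) net =
  places :: "'s set"
  transs :: "'t set"
  flow_in :: "('s \<times> 't) set"
  flow_out :: "('t \<times> 's) set"
  tlab :: "'t \<Rightarrow> 'act"

definition preset :: "('s, 't, 'act) net \<Rightarrow> 't \<Rightarrow> 's set" where
  "preset N t = {s. (s, t) \<in> flow_in N}"

definition postset :: "('s, 't, 'act) net \<Rightarrow> 't \<Rightarrow> 's set" where
  "postset N t = {s. (t, s) \<in> flow_out N}"

definition wf_net :: "('s, 't, 'act) net \<Rightarrow> bool" where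
  "wf_net N \<longleftrightarrow> flow_in N \<subseteq> places N \<times> transs N \<and> flow_out N \<subseteq> transs N \<times> places N \<and>
     (\<forall>t\<in>transs N. preset N t \<noteq> {} \<and> postset N t \<noteq> {})"

text \<open>A causal marking is a finite set of pairs (K, s), written K |- s.\<close>
type_synonym ('e, 'act, 's) cmarking = "(('e \<times> 'act) set \<times> 's) set"

definition causal_marking :: "('s, 't, 'act) net \<Rightarrow> ('e, 'act, 's) cmarking \<Rightarrow> bool" where
  "causal_marking N c \<longleftrightarrow> finite c \<and> (\<forall>(K, s)\<in>c. s \<in> places N \<and> finite K)"

definition causes :: "('e, 'act, 's) cmarking \<Rightarrow> ('e \<times> 'act) set" where
  "causes c = \<Union> (fst ` c)"

definition cplaces :: "('e, 'act, 's) cmarking \<Rightarrow> 's set" where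
  "cplaces c = snd ` c"

definition entails :: "('e \<times> 'act) set \<Rightarrow> 's set \<Rightarrow> ('e, 'act, 's) cmarking" where
  "entails K m = (\<lambda>s. (K, s)) ` m"

definition cmap :: "('e, 'act, 's) cmarking \<Rightarrow> ('e \<Rightarrow> 'e) \<Rightarrow> ('e, 'act, 's) cmarking" where
  "cmap c \<sigma> = (\<lambda>(K, s). (lmap \<sigma> K, s)) ` c"

definition pmarking :: "('s, 't, 'act) net \<Rightarrow> ('e, 'act) lposet \<Rightarrow> ('e, 'act, 's) cmarking \<Rightarrow> bool" where
  "pmarking N P c \<longleftrightarrow> fin_lposet P \<and> causal_marking N c \<and>
     (\<forall>(K, s)\<in>c. K \<subseteq> lev P \<and> down_closed P K)"

text \<open>Transitions between P-markings (P, c), labelled by (K, (e, a)) standing for K |- e_a.\<close>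
inductive ccg :: "('s, 't, 'act) net \<Rightarrow> ('e, 'act) lposet \<times> ('e, 'act, 's) cmarking
    \<Rightarrow> ('e \<times> 'act) set \<times> ('e \<times> 'act)
    \<Rightarrow> ('e, 'act) lposet \<times> ('e, 'act, 's) cmarking \<Rightarrow> bool"
  for N where
  fire: "\<lbrakk> t \<in> transs N; pmarking N P (c \<union> c'); cplaces c = preset N t; a = tlab N t;
           e \<notin> ev P; K = maxO P (causes c) \<rbrakk> \<Longrightarrow>
         ccg N (P, c \<union> c') (K, (e, a))
             (delta P K e a, entails (causes c \<union> {(e, a)}) (postset N t) \<union> c')"

end

theory Submission
  imports Defs
begin

lemma iso_inj: "isomorphism \<sigma> O1 O2 \<Longrightarrow> inj_on \<sigma> (ev O1)"
  by (simp add: isomorphism_def bij_betw_def)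

lemma iso_img: "isomorphism \<sigma> O1 O2 \<Longrightarrow> \<sigma> ` ev O1 = ev O2"
  by (simp add: isomorphism_def bij_betw_def)

lemma iso_lab: "isomorphism \<sigma> O1 O2 \<Longrightarrow> x \<in> ev O1 \<Longrightarrow> lab O2 (\<sigma> x) = lab O1 x"
  by (simp add: isomorphism_def morphism_def)

lemma iso_ord: assumes "isomorphism \<sigma> O1 O2" "x \<in> ev O1" "y \<in> ev O1"
  shows "(\<sigma> x, \<sigma> y) \<in> ord O2 \<longleftrightarrow> (x, y) \<in> ord O1"
proof
  assume h: "(\<sigma> x, \<sigma> y) \<in> ord O2"
  have m: "morphism (the_inv_into (ev O1) \<sigma>) O2 O1" using assms(1) by (simp add: isomorphism_def)
  have "\<sigma> x \<in> ev O2" "\<sigma> y \<in> ev O2" using assms iso_img by blast+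
  with m h have "(the_inv_into (ev O1) \<sigma> (\<sigma> x), the_inv_into (ev O1) \<sigma> (\<sigma> y)) \<in> ord O1"
    unfolding morphism_def by blast
  then show "(x, y) \<in> ord O1" using the_inv_into_f_f[OF iso_inj[OF assms(1)]] assms(2,3) by simp
next
  assume "(x, y) \<in> ord O1"
  then show "(\<sigma> x, \<sigma> y) \<in> ord O2" using assms unfolding isomorphism_def morphism_def by blast
qed

lemma iso_lle: assumes "isomorphism \<sigma> O1 O2" "x \<in> ev O1" "y \<in> ev O1"
  shows "lle O2 (\<sigma> x, a) (\<sigma> y, b) \<longleftrightarrow> lle O1 (x, a) (y, b)"
  using iso_ord[OF assms] iso_lab[OF assms(1)] assms(2,3) by (simp add: lle_def lev_def)

lemma lmap_inj:
  assumes "inj_on \<sigma> A" "fst ` K \<subseteq> A" "fst ` K' \<subseteq> A" "lmap \<sigma> K = lmap \<sigma> K'"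
  shows "K = K'"
proof -
  have i: "inj_on (\<lambda>(x, a). (\<sigma> x, a)) (A \<times> UNIV)"
    using assms(1) by (auto simp: inj_on_def)
  have "K \<subseteq> A \<times> UNIV" "K' \<subseteq> A \<times> UNIV" using assms(2,3) by force+
  then show ?thesis using assms(4) inj_on_image_eq_iff[OF i] unfolding lmap_def by blast
qed

lemma lmap_mem:
  assumes "inj_on \<sigma> A" "fst ` K \<subseteq> A" "x \<in> A"
  shows "(\<sigma> x, b) \<in> lmap \<sigma> K \<longleftrightarrow> (x, b) \<in> K"
proof
  assume "(\<sigma> x, b) \<in> lmap \<sigma> K"
  then obtain y where y: "(y, b) \<in> K" "\<sigma> y = \<sigma> x" unfolding lmap_def by auto
  have "y \<in> A" using y(1) assms(2) by force
  then have "y = x" using y(2) assms(1,3) unfolding inj_on_def by blast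
  then show "(x, b) \<in> K" using y(1) by simp
next
  assume "(x, b) \<in> K"
  then show "(\<sigma> x, b) \<in> lmap \<sigma> K" unfolding lmap_def by force
qed

lemma iso_maxO:
  assumes iso: "isomorphism \<sigma> O1 O2" and S: "fst ` S \<subseteq> ev O1"
  shows "maxO O2 (lmap \<sigma> S) = lmap \<sigma> (maxO O1 S)"
proof -
  have inj: "inj_on \<sigma> (ev O1)" using iso_inj[OF iso] .
  show ?thesis
  proof (rule set_eqI, rule iffI)
    fix z assume z: "z \<in> maxO O2 (lmap \<sigma> S)"
    then obtain x a where xa: "(x, a) \<in> S" "z = (\<sigma> x, a)" unfolding maxO_def lmap_def by auto
    have x: "x \<in> ev O1" using xa S by force
    have "(x, a) \<in> maxO O1 S"
      unfolding maxO_def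
    proof (clarsimp simp: xa)
      fix y b assume yb: "(y, b) \<in> S" "lle O1 (x, a) (y, b)"
      have y: "y \<in> ev O1" using yb S by force
      have "(\<sigma> y, b) \<in> lmap \<sigma> S" using yb unfolding lmap_def by force
      moreover have "lle O2 (\<sigma> x, a) (\<sigma> y, b)" using iso_lle[OF iso x y] yb by simp
      ultimately have "(\<sigma> y, b) = (\<sigma> x, a)" using z xa unfolding maxO_def by auto
      then show "y = x \<and> b = a" using inj x y by (auto simp: inj_on_def)
    qed
    then show "z \<in> lmap \<sigma> (maxO O1 S)" using xa unfolding lmap_def by force
  next
    fix z assume z: "z \<in> lmap \<sigma> (maxO O1 S)"
    then obtain x a where xa: "(x, a) \<in> maxO O1 S" "z = (\<sigma> x, a)" unfolding lmap_def by auto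
    have xS: "(x, a) \<in> S" using xa unfolding maxO_def by auto
    have x: "x \<in> ev O1" using xS S by force
    show "z \<in> maxO O2 (lmap \<sigma> S)"
      unfolding maxO_def
    proof (clarsimp simp: xa, intro conjI ballI impI)
      show "(\<sigma> x, a) \<in> lmap \<sigma> S" using xS unfolding lmap_def by force
    next
      fix w assume w: "w \<in> lmap \<sigma> S" "lle O2 (\<sigma> x, a) w"
      then obtain y b where yb: "(y, b) \<in> S" "w = (\<sigma> y, b)" unfolding lmap_def by auto
      have y: "y \<in> ev O1" using yb S by force
      have "lle O1 (x, a) (y, b)" using iso_lle[OF iso x y] w yb by simp
      then have "(y, b) = (x, a)" using xa yb unfolding maxO_def by auto
      then show "w = (\<sigma> x, a)" using yb by simp
    qed
  qed
qed

lemma iso_lev: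
  assumes iso: "isomorphism \<sigma> O1 O2" and S: "fst ` S \<subseteq> ev O1"
  shows "lmap \<sigma> S \<subseteq> lev O2 \<longleftrightarrow> S \<subseteq> lev O1"
proof -
  have e: "\<And>x a. (x, a) \<in> S \<Longrightarrow> lab O2 (\<sigma> x) = lab O1 x"
    using S iso_lab[OF iso] by force
  show ?thesis
  proof
    assume h: "lmap \<sigma> S \<subseteq> lev O2"
    show "S \<subseteq> lev O1"
    proof
      fix p assume p: "p \<in> S"
      obtain x a where xa: "p = (x, a)" by force
      have "(\<sigma> x, a) \<in> lmap \<sigma> S" using p xa unfolding lmap_def by force
      then have "lab O2 (\<sigma> x) = Some a" using h unfolding lev_def by auto
      then show "p \<in> lev O1" using e p xa unfolding lev_def by auto
    qed
  next
    assume h: "S \<subseteq> lev O1"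
    show "lmap \<sigma> S \<subseteq> lev O2"
    proof
      fix q assume "q \<in> lmap \<sigma> S"
      then obtain x a where xa: "(x, a) \<in> S" "q = (\<sigma> x, a)" unfolding lmap_def by auto
      then have "lab O1 x = Some a" using h unfolding lev_def by auto
      then show "q \<in> lev O2" using e xa unfolding lev_def by auto
    qed
  qed
qed

lemma iso_dc:
  assumes iso: "isomorphism \<sigma> O1 O2" and S: "fst ` S \<subseteq> ev O1"
  shows "down_closed O2 (lmap \<sigma> S) \<longleftrightarrow> down_closed O1 S"
proof -
  have inj: "inj_on \<sigma> (ev O1)" using iso_inj[OF iso] .
  show ?thesis
  proof
    assume d: "down_closed O2 (lmap \<sigma> S)"
    show "down_closed O1 S" unfolding down_closed_def
    proof (intro ballI allI impI)
      fix y x assume y: "y \<in> S" and l: "lle O1 x y"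
      obtain y1 b where yb: "y = (y1, b)" by force
      obtain x1 c where xc: "x = (x1, c)" by force
      have y1: "y1 \<in> ev O1" using y yb S by force
      have x1: "x1 \<in> ev O1" using l xc unfolding lle_def lev_def ev_def by auto
      have "lle O2 (\<sigma> x1, c) (\<sigma> y1, b)" using iso_lle[OF iso x1 y1] l xc yb by simp
      moreover have "(\<sigma> y1, b) \<in> lmap \<sigma> S" using y yb unfolding lmap_def by force
      ultimately have "(\<sigma> x1, c) \<in> lmap \<sigma> S" using d unfolding down_closed_def by blast
      then show "x \<in> S" using lmap_mem[OF inj S x1] xc by simp
    qed
  next
    assume d: "down_closed O1 S"
    show "down_closed O2 (lmap \<sigma> S)" unfolding down_closed_def
    proof (intro ballI allI impI)
      fix w z assume w: "w \<in> lmap \<sigma> S" and l: "lle O2 z w"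
      obtain y1 b where yb: "(y1, b) \<in> S" "w = (\<sigma> y1, b)" using w unfolding lmap_def by auto
      obtain z1 c where zc: "z = (z1, c)" by force
      have y1: "y1 \<in> ev O1" using yb S by force
      have "z1 \<in> ev O2" using l zc unfolding lle_def lev_def ev_def by auto
      then obtain x1 where x1: "x1 \<in> ev O1" "z1 = \<sigma> x1" using iso_img[OF iso] by blast
      have "lle O1 (x1, c) (y1, b)" using iso_lle[OF iso x1(1) y1] l zc x1 yb by simp
      then have "(x1, c) \<in> S" using d yb unfolding down_closed_def by blast
      then show "z \<in> lmap \<sigma> S" using zc x1 unfolding lmap_def by force
    qed
  qed
qed

lemma causes_cmap: "causes (cmap c \<sigma>) = lmap \<sigma> (causes c)"
  unfolding causes_def cmap_def lmap_def by force

lemma cplaces_cmap: "cplaces (cmap c \<sigma>) = cplaces c"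
  unfolding cplaces_def cmap_def by force

lemma cmap_Un: "cmap (c \<union> d) \<sigma> = cmap c \<sigma> \<union> cmap d \<sigma>"
  unfolding cmap_def by blast

lemma cmap_entails: "cmap (entails K m) \<sigma> = entails (lmap \<sigma> K) m"
  unfolding cmap_def entails_def by force

lemma lmap_Un: "lmap \<sigma> (A \<union> B) = lmap \<sigma> A \<union> lmap \<sigma> B"
  unfolding lmap_def by blast

lemma lmap_single: "lmap \<sigma> {(x, a)} = {(\<sigma> x, a)}"
  unfolding lmap_def by simp

lemma lmap_cong: "(\<And>x. x \<in> fst ` K \<Longrightarrow> \<sigma> x = \<tau> x) \<Longrightarrow> lmap \<sigma> K = lmap \<tau> K"
  unfolding lmap_def by force

lemma cmap_cong: "(\<And>x. x \<in> fst ` causes c \<Longrightarrow> \<sigma> x = \<tau> x) \<Longrightarrow> cmap c \<sigma> = cmap c \<tau>"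
  unfolding cmap_def
  apply (rule image_cong[OF refl])
  apply (clarsimp)
  apply (rule lmap_cong)
  unfolding causes_def by force

lemma cmap_inj:
  fixes c d :: "('e, 'act, 's) cmarking"
  assumes "inj_on \<sigma> A" "fst ` causes c \<subseteq> A" "fst ` causes d \<subseteq> A" "cmap c \<sigma> = cmap d \<sigma>"
  shows "c = d"
proof -
  define f where "f = (\<lambda>(K::('e \<times> 'act) set, s::'s). (lmap \<sigma> K, s))"
  have i: "inj_on f {p. fst ` fst p \<subseteq> A}"
  proof (rule inj_onI)
    fix p q assume p: "p \<in> {p. fst ` fst p \<subseteq> A}" and q: "q \<in> {p. fst ` fst p \<subseteq> A}"
      and pq: "f p = f q"
    obtain K s where Ks: "p = (K, s)" by force
    obtain K' s' where Ks': "q = (K', s')" by force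
    have "lmap \<sigma> K = lmap \<sigma> K'" "s = s'" using pq Ks Ks' unfolding f_def by simp_all
    moreover have "K = K'" using lmap_inj[OF assms(1)] p q Ks Ks' calculation(1) by simp
    ultimately show "p = q" using Ks Ks' by simp
  qed
  have sub: "x \<subseteq> {p. fst ` fst p \<subseteq> A}" if "fst ` causes x \<subseteq> A" for x
  proof
    fix p assume "p \<in> x"
    then have "fst p \<subseteq> causes x" unfolding causes_def by blast
    then show "p \<in> {p. fst ` fst p \<subseteq> A}" using that by blast
  qed
  have "f ` c = f ` d" using assms(4) unfolding cmap_def f_def by simp
  then show ?thesis using inj_on_image_eq_iff[OF i sub[OF assms(2)] sub[OF assms(3)]] by simp
qed

lemma causal_cmap: "causal_marking N c \<Longrightarrow> causal_marking N (cmap c \<sigma>)"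
  unfolding causal_marking_def cmap_def lmap_def by auto

lemma ball_img: "(\<forall>p\<in>f ` C. Q p) = (\<forall>p\<in>C. Q (f p))"
  by blast

lemma iso_pmarking:
  fixes c :: "('e, 'act, 's) cmarking"
  assumes iso: "isomorphism \<sigma> O1 O2" and f1: "fin_lposet O1" and f2: "fin_lposet O2"
    and cm: "causal_marking N c" and S: "fst ` causes c \<subseteq> ev O1"
  shows "pmarking N O2 (cmap c \<sigma>) \<longleftrightarrow> pmarking N O1 c"
proof -
  define f where "f = (\<lambda>(K::('e \<times> 'act) set, s::'s). (lmap \<sigma> K, s))"
  define Q2 where "Q2 = (\<lambda>p::('e \<times> 'act) set \<times> 's. case p of (K, s) \<Rightarrow> K \<subseteq> lev O2 \<and> down_closed O2 K)"
  define Q1 where "Q1 = (\<lambda>p::('e \<times> 'act) set \<times> 's. case p of (K, s) \<Rightarrow> K \<subseteq> lev O1 \<and> down_closed O1 K)"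
  have pt: "Q2 (f p) = Q1 p" if "p \<in> c" for p
  proof -
    obtain K s where p: "p = (K, s)" by force
    have "K \<subseteq> causes c" using that p unfolding causes_def by force
    then have "fst ` K \<subseteq> ev O1" using S by blast
    then show ?thesis using iso_lev[OF iso] iso_dc[OF iso] p unfolding Q1_def Q2_def f_def by simp
  qed
  have "(\<forall>p\<in>f ` c. Q2 p) = (\<forall>p\<in>c. Q1 p)" unfolding ball_img using pt by blast
  moreover have "cmap c \<sigma> = f ` c" unfolding cmap_def f_def by simp
  ultimately have eq: "(\<forall>p\<in>cmap c \<sigma>. Q2 p) = (\<forall>p\<in>c. Q1 p)" by simp
  have "pmarking N O2 (cmap c \<sigma>) = (\<forall>p\<in>cmap c \<sigma>. Q2 p)"
    unfolding pmarking_def Q2_def using f2 causal_cmap[OF cm] by simp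
  moreover have "pmarking N O1 c = (\<forall>p\<in>c. Q1 p)"
    unfolding pmarking_def Q1_def using f1 cm by simp
  ultimately show ?thesis using eq by simp
qed

lemma causes_mono: "c \<subseteq> d \<Longrightarrow> causes c \<subseteq> causes d"
  unfolding causes_def by blast

lemma causes_Un: "causes (c \<union> d) = causes c \<union> causes d"
  unfolding causes_def by blast

lemma causes_entails: "causes (entails K m) \<subseteq> K"
  unfolding causes_def entails_def by auto

lemma ccg_inv:
  assumes "ccg N (P0, d1) (K, (e, a)) (D, c1')"
  obtains t c c'' where "t \<in> transs N" "pmarking N P0 (c \<union> c'')"
      "d1 = c \<union> c''" "cplaces c = preset N t" "a = tlab N t"
      "K = maxO P0 (causes c)"
      "c1' = entails (causes c \<union> {(e, a)}) (postset N t) \<union> c''"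
proof -
  have "\<exists>t c c''. t \<in> transs N \<and> pmarking N P0 (c \<union> c'')
      \<and> d1 = c \<union> c'' \<and> cplaces c = preset N t \<and> a = tlab N t
      \<and> K = maxO P0 (causes c)
      \<and> c1' = entails (causes c \<union> {(e, a)}) (postset N t) \<union> c''"
    using assms by (cases rule: ccg.cases) (simp only: prod.inject, blast)
  then show ?thesis using that by blast
qed

theorem lemma1:
  fixes N :: "('s, 't, 'act) net"
    and O1 O2 :: "('e::infinite, 'act) lposet"
    and \<sigma> :: "'e \<Rightarrow> 'e"
    and c1 c1' :: "('e, 'act, 's) cmarking"
    and K :: "('e \<times> 'act) set" and a :: 'act and e e' :: 'e
  assumes "wf_net N"
    and "fin_lposet O1" and "fin_lposet O2"
    and "isomorphism \<sigma> O1 O2"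
    and "causal_marking N c1" and "causal_marking N c1'"
    and "K \<subseteq> lev O1"
    and "e \<notin> ev O1" and "e' \<notin> ev O2"
    and "fst ` causes c1 \<subseteq> ev O1"
    and "fst ` causes c1' \<subseteq> insert e (ev O1)"
  shows "ccg N (O1, c1) (K, (e, a)) (delta O1 K e a, c1')
     \<longleftrightarrow> ccg N (O2, cmap c1 \<sigma>) (lmap \<sigma> K, (e', a))
            (delta O2 (lmap \<sigma> K) e' a, cmap c1' (\<sigma>(e := e')))"
proof -
  note iso = assms(4)
  have inj: "inj_on \<sigma> (ev O1)" using iso_inj[OF iso] .
  define \<tau> where "\<tau> = \<sigma>(e := e')"
  have inj\<tau>: "inj_on \<tau> (insert e (ev O1))"
  proof -
    have "inj_on \<tau> (ev O1)" using inj assms(8) unfolding \<tau>_def inj_on_def by auto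
    moreover have "\<tau> e \<notin> \<tau> ` (ev O1 - {e})"
      using assms(8,9) iso_img[OF iso] unfolding \<tau>_def by auto
    ultimately show ?thesis by (simp add: insert_absorb assms(8))
  qed
  have \<tau>cm: "cmap c \<tau> = cmap c \<sigma>" if "fst ` causes c \<subseteq> ev O1" for c
    using that assms(8) unfolding \<tau>_def by (intro cmap_cong) auto
  have \<tau>lm: "lmap \<tau> S = lmap \<sigma> S" if "fst ` S \<subseteq> ev O1" for S
    using that assms(8) unfolding \<tau>_def by (intro lmap_cong) auto
  have Kev: "fst ` K \<subseteq> ev O1" using assms(7) unfolding lev_def ev_def by auto
  show ?thesis unfolding \<tau>_def[symmetric]
  proof
    assume "ccg N (O1, c1) (K, (e, a)) (delta O1 K e a, c1')"
    then obtain t c c'' where t: "t \<in> transs N" and pm: "pmarking N O1 (c \<union> c'')"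
      and c1: "c1 = c \<union> c''" and cp: "cplaces c = preset N t" and at: "a = tlab N t"
      and K: "K = maxO O1 (causes c)"
      and c1': "c1' = entails (causes c \<union> {(e, a)}) (postset N t) \<union> c''"
      by (rule ccg_inv)
    have cev: "fst ` causes c \<subseteq> ev O1" using assms(10) c1 causes_mono[of c c1] by blast
    have c''ev: "fst ` causes c'' \<subseteq> ev O1" using assms(10) c1 causes_mono[of c'' c1] by blast
    have "pmarking N O2 (cmap c1 \<sigma>)" using iso_pmarking[OF iso assms(2,3,5,10)] pm c1 by simp
    then have pm2: "pmarking N O2 (cmap c \<sigma> \<union> cmap c'' \<sigma>)" by (simp only: c1 cmap_Un)
    have fire2: "ccg N (O2, cmap c \<sigma> \<union> cmap c'' \<sigma>) (maxO O2 (causes (cmap c \<sigma>)), (e', tlab N t))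
       (delta O2 (maxO O2 (causes (cmap c \<sigma>))) e' (tlab N t),
        entails (causes (cmap c \<sigma>) \<union> {(e', tlab N t)}) (postset N t) \<union> cmap c'' \<sigma>)"
      by (rule ccg.fire[OF t pm2]) (simp_all add: cplaces_cmap cp assms(9))
    have m2: "maxO O2 (causes (cmap c \<sigma>)) = lmap \<sigma> K"
      by (simp only: causes_cmap iso_maxO[OF iso cev] K)
    have c1'eq: "cmap c1' \<tau> = entails (causes (cmap c \<sigma>) \<union> {(e', a)}) (postset N t) \<union> cmap c'' \<sigma>"
    proof -
      have "cmap c1' \<tau> = entails (lmap \<tau> (causes c) \<union> {(e', a)}) (postset N t) \<union> cmap c'' \<tau>"
        unfolding c1' cmap_Un cmap_entails lmap_Un by (simp add: lmap_single \<tau>_def)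
      then show ?thesis by (simp only: \<tau>lm[OF cev] \<tau>cm[OF c''ev] causes_cmap)
    qed
    have eq: "cmap c1 \<sigma> = cmap c \<sigma> \<union> cmap c'' \<sigma>" by (simp add: c1 cmap_Un)
    show "ccg N (O2, cmap c1 \<sigma>) (lmap \<sigma> K, (e', a)) (delta O2 (lmap \<sigma> K) e' a, cmap c1' \<tau>)"
      unfolding eq c1'eq m2[symmetric] at using fire2 .
  next
    assume "ccg N (O2, cmap c1 \<sigma>) (lmap \<sigma> K, (e', a)) (delta O2 (lmap \<sigma> K) e' a, cmap c1' \<tau>)"
    then obtain t d d'' where t: "t \<in> transs N" and pm: "pmarking N O2 (d \<union> d'')"
      and c1: "cmap c1 \<sigma> = d \<union> d''" and cp: "cplaces d = preset N t" and at: "a = tlab N t"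
      and K: "lmap \<sigma> K = maxO O2 (causes d)"
      and c1': "cmap c1' \<tau> = entails (causes d \<union> {(e', a)}) (postset N t) \<union> d''"
      by (rule ccg_inv)
    define f where "f = (\<lambda>(K::('e \<times> 'act) set, s::'s). (lmap \<sigma> K, s))"
    define c where "c = {p \<in> c1. f p \<in> d}"
    define c'' where "c'' = {p \<in> c1. f p \<in> d''}"
    have cmf: "cmap x \<sigma> = f ` x" for x unfolding cmap_def f_def by simp
    have fc1: "f ` c1 = d \<union> d''" using c1 by (simp only: cmf)
    have all: "\<forall>p\<in>c1. f p \<in> d \<or> f p \<in> d''" using fc1 by blast
    have cc: "c1 = c \<union> c''" using all unfolding c_def c''_def by auto
    have cd: "cmap c \<sigma> = d"
    proof -
      have "f ` c = d"
      proof
        show "f ` c \<subseteq> d" unfolding c_def by auto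
        show "d \<subseteq> f ` c"
        proof
          fix y assume "y \<in> d"
          then have "y \<in> f ` c1" using fc1 by simp
          then obtain p where "p \<in> c1" "y = f p" by auto
          then show "y \<in> f ` c" using \<open>y \<in> d\<close> unfolding c_def by auto
        qed
      qed
      then show ?thesis by (simp only: cmf)
    qed
    have cd'': "cmap c'' \<sigma> = d''"
    proof -
      have "f ` c'' = d''"
      proof
        show "f ` c'' \<subseteq> d''" unfolding c''_def by auto
        show "d'' \<subseteq> f ` c''"
        proof
          fix y assume "y \<in> d''"
          then have "y \<in> f ` c1" using fc1 by simp
          then obtain p where "p \<in> c1" "y = f p" by auto
          then show "y \<in> f ` c''" using \<open>y \<in> d''\<close> unfolding c''_def by auto
        qed
      qed
      then show ?thesis by (simp only: cmf)
    qed
    have cev: "fst ` causes c \<subseteq> ev O1" using assms(10) cc causes_mono[of c c1] by blast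
    have c''ev: "fst ` causes c'' \<subseteq> ev O1" using assms(10) cc causes_mono[of c'' c1] by blast
    have "pmarking N O2 (cmap c1 \<sigma>)" using pm c1 by simp
    then have "pmarking N O1 c1" using iso_pmarking[OF iso assms(2,3,5,10)] by simp
    then have pm1: "pmarking N O1 (c \<union> c'')" by (simp only: cc)
    have mev: "fst ` maxO O1 (causes c) \<subseteq> ev O1" using cev unfolding maxO_def by auto
    have "lmap \<sigma> K = lmap \<sigma> (maxO O1 (causes c))"
      by (simp only: K cd[symmetric] causes_cmap iso_maxO[OF iso cev])
    then have KK: "K = maxO O1 (causes c)" by (rule lmap_inj[OF inj Kev mev])
    have cpc: "cplaces c = preset N t"
    proof -
      have "cplaces c = cplaces (cmap c \<sigma>)" by (simp add: cplaces_cmap)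
      then show ?thesis using cd cp by simp
    qed
    have fire: "ccg N (O1, c \<union> c'') (maxO O1 (causes c), (e, tlab N t))
       (delta O1 (maxO O1 (causes c)) e (tlab N t),
        entails (causes c \<union> {(e, tlab N t)}) (postset N t) \<union> c'')"
      by (rule ccg.fire[OF t pm1]) (simp_all add: assms(8) cpc)
    have c1'eq: "c1' = entails (causes c \<union> {(e, a)}) (postset N t) \<union> c''"
    proof (rule cmap_inj[OF inj\<tau> assms(11)])
      show "fst ` causes (entails (causes c \<union> {(e, a)}) (postset N t) \<union> c'') \<subseteq> insert e (ev O1)"
      proof -
        have "fst ` causes (entails (causes c \<union> {(e, a)}) (postset N t)) \<subseteq> fst ` (causes c \<union> {(e, a)})"
          by (rule image_mono[OF causes_entails])
        also have "\<dots> \<subseteq> insert e (ev O1)" using cev by auto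
        finally show ?thesis using c''ev by (simp only: causes_Un image_Un) blast
      qed
      have "cmap (entails (causes c \<union> {(e, a)}) (postset N t) \<union> c'') \<tau>
          = entails (lmap \<tau> (causes c) \<union> {(e', a)}) (postset N t) \<union> cmap c'' \<tau>"
        unfolding cmap_Un cmap_entails lmap_Un by (simp add: lmap_single \<tau>_def)
      also have "\<dots> = cmap c1' \<tau>"
        by (simp only: c1' \<tau>lm[OF cev] \<tau>cm[OF c''ev] cd[symmetric] cd''[symmetric] causes_cmap)
      finally show "cmap c1' \<tau> = cmap (entails (causes c \<union> {(e, a)}) (postset N t) \<union> c'') \<tau>" by simp
    qed
    show "ccg N (O1, c1) (K, (e, a)) (delta O1 K e a, c1')"
      unfolding c1'eq cc KK at using fire .
  qed
qed

end
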